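(* Let $\lambda\in(0,\infty)^E$ satisfy the triangle inequalities at every vertex: whenever $e,f,g$ are the three edges at a vertex, $\lambda(e)\le\lambda(f)+\lambda(g)$, $\lambda(f)\le\lambda(e)+\lambda(g)$ and $\lambda(g)\le\lambda(e)+\lambda(f)$. Let $\mu=\min_{e\in E}\lambda(e)$. Then $\rho<\frac{8V}{\mu}$.
   Context: $\Gamma$ is a finite trivalent graph with edge set $E$ and $V$ vertices. For $\lambda\in(0,\infty)^E$ define $$\rho=2\sum_{v}\Big(\frac{\lambda(e_v)}{\lambda(f_v)\lambda(g_v)}+\frac{\lambda(f_v)}{\lambda(e_v)\lambda(g_v)}+\frac{\lambda(g_v)}{\lambda(e_v)\lambda(f_v)}\Big),$$ where the sum is over the vertices $v$ and $e_v,f_v,g_v$ are the three edges at $v$. For an ideal triangulation dual graph, $\rho$ equals twice the sum of all simplicial coordinates, i.e. the sum of the $n$ puncture sums $\rho_i$. *)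

theory Defs
  imports Complex_Main
begin

text \<open>A finite trivalent (multi)graph: vertex set V, edge set E, and for each vertex v
  the (ordered) triple of edges at v.  Loops are allowed (an edge may occur twice in a
  triple).\<close>

definition occ :: "'e \<times> 'e \<times> 'e \<Rightarrow> 'e \<Rightarrow> nat" where
  "occ t e = (case t of (a, b, c) \<Rightarrow>
      (if a = e then 1 else 0) + (if b = e then 1 else 0) + (if c = e then 1 else 0))"

definition trivalent_graph :: "'v set \<Rightarrow> 'e set \<Rightarrow> ('v \<Rightarrow> 'e \<times> 'e \<times> 'e) \<Rightarrow> bool" where
  "trivalent_graph V E inc \<longleftrightarrow> finite V \<and> finite E \<and>
     (\<forall>v\<in>V. case inc v of (a, b, c) \<Rightarrow> a \<in> E \<and> b \<in> E \<and> c \<in> E) \<and>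
     (\<forall>e\<in>E. (\<Sum>v\<in>V. occ (inc v) e) = 2)"

definition vertex_term :: "('e \<Rightarrow> real) \<Rightarrow> 'e \<times> 'e \<times> 'e \<Rightarrow> real" where
  "vertex_term lam t = (case t of (e, f, g) \<Rightarrow>
      lam e / (lam f * lam g) + lam f / (lam e * lam g) + lam g / (lam e * lam f))"

definition rho :: "'v set \<Rightarrow> ('v \<Rightarrow> 'e \<times> 'e \<times> 'e) \<Rightarrow> ('e \<Rightarrow> real) \<Rightarrow> real" where
  "rho V inc lam = 2 * (\<Sum>v\<in>V. vertex_term lam (inc v))"

definition triangle_ineqs :: "('e \<Rightarrow> real) \<Rightarrow> 'e \<times> 'e \<times> 'e \<Rightarrow> bool" where
  "triangle_ineqs lam t = (case t of (e, f, g) \<Rightarrow>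
      lam e \<le> lam f + lam g \<and> lam f \<le> lam e + lam g \<and> lam g \<le> lam e + lam f)"

end

theory Submission
  imports Defs
begin

lemma ord_case:
  fixes a b c :: real
  assumes "a \<le> b + c" "b \<le> a" "c \<le> b" "0 < c"
  shows "a*a + b*b + c*c < 4*(a*b)"
proof -
  have X: "(a-b)*(b+c-a) \<ge> 0" using assms by simp
  have Y: "(2*b-c)*(a-b) \<ge> 0" using assms by simp
  have "c*c \<le> b*b" using assms by (intro mult_mono) auto
  moreover have "0 < b*b" using assms by simp
  ultimately have Z: "0 < 2*b*b - c*c" by linarith
  have E: "4*(a*b) - (a*a+b*b+c*c) = (a-b)*(b+c-a) + (2*b-c)*(a-b) + (2*b*b - c*c)"
    by (simp add: algebra_simps)
  have "0 < 4*(a*b) - (a*a+b*b+c*c)" unfolding E using X Y Z by linarith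
  then show ?thesis by linarith
qed

lemma sym_bound:
  fixes a b c :: real
  assumes "a \<le> b + c" "b \<le> a + c" "c \<le> a + b" "0 < a" "0 < b" "0 < c"
  shows "a*a + b*b + c*c < 4 * max (a*b) (max (b*c) (a*c))"
proof -
  have M: "a*b \<le> max (a*b) (max (b*c) (a*c))" "b*c \<le> max (a*b) (max (b*c) (a*c))"
    "a*c \<le> max (a*b) (max (b*c) (a*c))" "b*a \<le> max (a*b) (max (b*c) (a*c))"
    "c*b \<le> max (a*b) (max (b*c) (a*c))" "c*a \<le> max (a*b) (max (b*c) (a*c))"
    by (auto simp: mult.commute)
  consider "b \<le> a" "c \<le> b" | "c \<le> a" "b \<le> c" | "a \<le> b" "c \<le> a" | "c \<le> b" "a \<le> c"
    | "a \<le> c" "b \<le> a" | "b \<le> c" "a \<le> b" by linarith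
  then show ?thesis
  proof cases
    case 1 have "a*a+b*b+c*c<4*(a*b)" by (rule ord_case[of a b c]) (use 1 assms in auto)
    then show ?thesis using M by linarith
  next
    case 2 have "a*a+c*c+b*b<4*(a*c)" by (rule ord_case[of a c b]) (use 2 assms in auto)
    then show ?thesis using M by linarith
  next
    case 3 have "b*b+a*a+c*c<4*(b*a)" by (rule ord_case[of b a c]) (use 3 assms in auto)
    then show ?thesis using M by linarith
  next
    case 4 have "b*b+c*c+a*a<4*(b*c)" by (rule ord_case[of b c a]) (use 4 assms in auto)
    then show ?thesis using M by linarith
  next
    case 5 have "c*c+a*a+b*b<4*(c*a)" by (rule ord_case[of c a b]) (use 5 assms in auto)
    then show ?thesis using M by linarith
  next
    case 6 have "c*c+b*b+a*a<4*(c*b)" by (rule ord_case[of c b a]) (use 6 assms in auto)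
    then show ?thesis using M by linarith
  qed
qed

lemma vt_bound:
  fixes a b c m :: real
  assumes "a \<le> b + c" "b \<le> a + c" "c \<le> a + b" "0 < m" "m \<le> a" "m \<le> b" "m \<le> c"
  shows "a/(b*c) + b/(a*c) + c/(a*b) < 4/m"
proof -
  have p: "0 < a" "0 < b" "0 < c" using assms by auto
  have "a/(b*c) + b/(a*c) + c/(a*b) = (a*a+b*b+c*c)/(a*b*c)" using p by (simp add: field_simps)
  also have "\<dots> < 4/m"
  proof -
    have "m*(a*b) \<le> c*(a*b)" using assms p by (intro mult_right_mono) auto
    moreover have "m*(b*c) \<le> a*(b*c)" using assms p by (intro mult_right_mono) auto
    moreover have "m*(a*c) \<le> b*(a*c)" using assms p by (intro mult_right_mono) auto
    ultimately have "m * max (a*b) (max (b*c) (a*c)) \<le> a*b*c"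
      by (simp add: max_def algebra_simps)
    moreover have "m*(a*a+b*b+c*c) < m*(4 * max (a*b) (max (b*c) (a*c)))"
      using sym_bound[OF assms(1-3) p] assms(4) by (rule mult_strict_left_mono)
    ultimately have "m*(a*a+b*b+c*c) < 4*(a*b*c)" by linarith
    thus ?thesis using p assms(4) by (simp add: field_simps)
  qed
  finally show ?thesis .
qed

theorem mainTheorem5:
  fixes V :: "'v set" and E :: "'e set" and inc :: "'v \<Rightarrow> 'e \<times> 'e \<times> 'e"
    and lam :: "'e \<Rightarrow> real"
  assumes "trivalent_graph V E inc"
    and "V \<noteq> {}"
    and "\<forall>e\<in>E. lam e > 0"
    and "\<forall>v\<in>V. triangle_ineqs lam (inc v)"
  shows "rho V inc lam < 8 * real (card V) / Min (lam ` E)"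
proof -
  have fV: "finite V" using conjunct1[OF assms(1)[unfolded trivalent_graph_def]] .
  have fE: "finite E" using conjunct1[OF conjunct2[OF assms(1)[unfolded trivalent_graph_def]]] .
  have inE: "a \<in> E \<and> b \<in> E \<and> c \<in> E" if "v \<in> V" "inc v = (a,b,c)" for v a b c
  proof -
    have "case inc v of (a, b, c) \<Rightarrow> a \<in> E \<and> b \<in> E \<and> c \<in> E"
      using bspec[OF conjunct1[OF conjunct2[OF conjunct2[OF assms(1)[unfolded trivalent_graph_def]]]] that(1)] .
    thus ?thesis using that(2) by simp
  qed
  obtain v0 where v0: "v0 \<in> V" using assms(2) by auto
  obtain a0 b0 c0 where "inc v0 = (a0,b0,c0)" by (cases "inc v0") blast
  hence "a0 \<in> E" using inE[OF v0] by blast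
  hence Ene: "E \<noteq> {}" by auto
  define m where "m = Min (lam ` E)"
  have fin: "finite (lam ` E)" using fE by simp
  have ne: "lam ` E \<noteq> {}" using Ene by simp
  have mpos: "0 < m"
  proof -
    have "m \<in> lam ` E" unfolding m_def using Min_in[OF fin ne] .
    thus ?thesis using assms(3) by auto
  qed
  have mle: "m \<le> lam e" if "e \<in> E" for e
    unfolding m_def using Min_le[OF fin] that by simp
  have each: "vertex_term lam (inc v) < 4/m" if "v \<in> V" for v
  proof -
    obtain a b c where fields: "inc v = (a,b,c)" by (cases "inc v") blast
    have abc: "a \<in> E" "b \<in> E" "c \<in> E" using inE[OF that fields] by auto
    have "triangle_ineqs lam (inc v)" using assms(4) that by blast
    hence "triangle_ineqs lam (a,b,c)" by (simp only: fields)
    hence t: "lam a \<le> lam b + lam c" "lam b \<le> lam a + lam c" "lam c \<le> lam a + lam b"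
      unfolding triangle_ineqs_def by auto
    have "vertex_term lam (a,b,c) < 4/m" unfolding vertex_term_def
      using vt_bound[OF t mpos mle[OF abc(1)] mle[OF abc(2)] mle[OF abc(3)]] by simp
    thus ?thesis using fields by simp
  qed
  have "(\<Sum>v\<in>V. vertex_term lam (inc v)) < (\<Sum>v\<in>V. 4/m)"
    by (rule sum_strict_mono[OF fV assms(2) each])
  also have "(\<Sum>v\<in>V. 4/m) = real (card V) * (4/m)" by simp
  finally have "2 * (\<Sum>v\<in>V. vertex_term lam (inc v)) < 2 * (real (card V) * (4/m))" by linarith
  moreover have "2 * (real (card V) * (4/m)) = 8 * real (card V) / m" by simp
  ultimately show ?thesis unfolding rho_def m_def by linarith
qed

end
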